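(* The family of power-divergence copulas is negatively ordered: if $-\infty<\lambda_1<\lambda_2<\infty$, then $C_{\lambda_1}(u_1,u_2)\ge C_{\lambda_2}(u_1,u_2)$ for all $u_1,u_2\in[0,1]$.
   Context: For $\lambda\in\mathbb{R}$ define $\phi_\lambda$ on $[0,\infty)$ by $\phi_\lambda(x)=\frac{1}{\lambda(\lambda+1)}(x^{\lambda+1}-x+\lambda(1-x))$ for $\lambda\neq-1,0$; $\phi_0(x)=1-x+x\log x$; $\phi_{-1}(x)=x-1-\log x$; values at $x=0$ are limits, so $\phi_\lambda(0)=1/(\lambda+1)$ for $\lambda>-1$ and $\phi_\lambda(0)=\infty$ for $\lambda\le-1$. On $[0,1]$, $\phi_\lambda$ is convex, strictly decreasing, $\phi_\lambda(1)=0$. The pseudoinverse is $\phi_\lambda^{[-1]}(t)=\phi_\lambda^{-1}(t)$ (inverse of $\phi_\lambda|_{[0,1]}$) for $0\le t<\phi_\lambda(0)$ and $0$ for $t\ge\phi_\lambda(0)$. The power-divergence (PD) copula is $C_\lambda(u_1,u_2)=\phi_\lambda^{[-1]}(\phi_\lambda(u_1)+\phi_\lambda(u_2))$, $u_1,u_2\in[0,1]$ (with $\phi_\lambda^{[-1]}(\infty)=0$). *)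

theory Defs
  imports "HOL-Analysis.Analysis" "HOL-Library.Extended_Real"
begin

definition pd_phi :: "real \<Rightarrow> real \<Rightarrow> ereal" where
  "pd_phi lam x =
     (if x = 0 then (if lam > -1 then ereal (1 / (lam + 1)) else \<infinity>)
      else if lam = 0 then ereal (1 - x + x * ln x)
      else if lam = -1 then ereal (x - 1 - ln x)
      else ereal ((x powr (lam + 1) - x + lam * (1 - x)) / (lam * (lam + 1))))"

definition pd_pinv :: "real \<Rightarrow> ereal \<Rightarrow> real" where
  "pd_pinv lam t =
     (if t < pd_phi lam 0 then (THE x. x \<in> {0..1} \<and> pd_phi lam x = t) else 0)"

definition pd_copula :: "real \<Rightarrow> real \<Rightarrow> real \<Rightarrow> real" where
  "pd_copula lam u1 u2 = pd_pinv lam (pd_phi lam u1 + pd_phi lam u2)"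

end

theory Submission
  imports Defs "HOL-Real_Asymp.Real_Asymp"
begin


definition sfun :: "real \<Rightarrow> real" where
  "sfun z = (if z = 0 then 1 else (exp z - 1) / z)"

lemma sfun_neg_le: "z < 0 \<Longrightarrow> sfun z \<le> 1"
  using exp_ge_add_one_self[of z] by (simp add: sfun_def divide_simps, linarith)

lemma sfun_pos_ge: "z > 0 \<Longrightarrow> sfun z \<ge> 1"
  using exp_ge_add_one_self[of z] by (simp add: sfun_def divide_simps, linarith)

lemma exp_conv: fixes t y :: real shows "0 \<le> t \<Longrightarrow> t \<le> 1 \<Longrightarrow> exp (t * y) \<le> (1 - t) + t * exp y"
  using convex_onD[OF exp_convex, of t 0 y] by simp

lemma sfun_mono: assumes "z1 < z2" shows "sfun z1 \<le> sfun z2"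
proof -
  consider "z1 < 0" "z2 \<le> 0" | "z1 < 0" "z2 > 0" | "z1 \<ge> 0" by linarith
  then show ?thesis
  proof cases
    case 1
    show ?thesis
    proof (cases "z2 = 0")
      case True then show ?thesis using sfun_neg_le[OF 1(1)] by (simp add: sfun_def)
    next
      case False
      then have z2: "z2 < 0" using 1 by simp
      define t where "t = z2 / z1"
      have t0: "0 \<le> t" "t \<le> 1" using 1 z2 assms by (auto simp: t_def divide_simps)
      have "exp (t * z1) \<le> (1 - t) + t * exp z1" by (rule exp_conv[OF t0])
      moreover have "t * z1 = z2" using 1 by (simp add: t_def)
      ultimately have "exp z2 - 1 \<le> (z2 / z1) * (exp z1 - 1)" by (simp add: t_def algebra_simps)
      then have "(exp z2 - 1) / z2 \<ge> (exp z1 - 1) / z1" using z2 1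
        by (simp add: divide_simps) (simp add: algebra_simps)
      then show ?thesis using z2 1 by (simp add: sfun_def)
    qed
  next
    case 2 then show ?thesis using sfun_neg_le sfun_pos_ge by fastforce
  next
    case 3
    show ?thesis
    proof (cases "z1 = 0")
      case True then show ?thesis using sfun_pos_ge[of z2] assms by (simp add: sfun_def)
    next
      case False
      then have z1: "z1 > 0" using 3 by simp
      define t where "t = z1 / z2"
      have t0: "0 \<le> t" "t \<le> 1" using z1 assms by (auto simp: t_def divide_simps)
      have "exp (t * z2) \<le> (1 - t) + t * exp z2" by (rule exp_conv[OF t0])
      moreover have "t * z2 = z1" using z1 assms by (simp add: t_def)
      ultimately have "exp z1 - 1 \<le> (z1 / z2) * (exp z2 - 1)" by (simp add: t_def algebra_simps)
      then have "(exp z1 - 1) / z1 \<le> (exp z2 - 1) / z2" using z1 assms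
        by (simp add: divide_simps) (simp add: algebra_simps)
      then show ?thesis using z1 assms by (simp add: sfun_def)
    qed
  qed
qed

lemma sfun_neg: "sfun (- z) = exp (- z) * sfun z"
  by (simp add: sfun_def divide_simps exp_minus)



definition P :: "real \<Rightarrow> real \<Rightarrow> real" where
  "P lam x = (if lam = 0 then 1 - x + x * ln x
      else if lam = -1 then x - 1 - ln x
      else (x powr (lam + 1) - x + lam * (1 - x)) / (lam * (lam + 1)))"

definition d :: "real \<Rightarrow> real \<Rightarrow> real" where
  "d lam x = (if lam = 0 then ln x else (x powr lam - 1) / lam)"

lemma phi_P: "x \<noteq> 0 \<Longrightarrow> pd_phi lam x = ereal (P lam x)"
  by (simp add: pd_phi_def P_def)

lemma P_1[simp]: "P lam 1 = 0"
  by (simp add: P_def)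

lemma P_deriv: assumes "x > 0" shows "(P lam has_real_derivative d lam x) (at x)"
proof -
  consider "lam = 0" | "lam = -1" | "lam \<noteq> 0" "lam \<noteq> -1" by blast
  then show ?thesis
  proof cases
    case 1
    have e: "P lam = (\<lambda>x. 1 - x + x * ln x)" using 1 by (simp add: P_def fun_eq_iff)
    show ?thesis unfolding e using assms 1
      by (auto intro!: derivative_eq_intros simp: d_def)
  next
    case 2
    have e: "P lam = (\<lambda>x. x - 1 - ln x)" using 2 by (simp add: P_def fun_eq_iff)
    show ?thesis unfolding e using assms 2
      by (auto intro!: derivative_eq_intros simp: d_def powr_minus divide_simps)
  next
    case 3
    have e: "P lam = (\<lambda>x. (x powr (lam + 1) - x + lam * (1 - x)) / (lam * (lam + 1)))"
      using 3 by (simp add: P_def fun_eq_iff)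
    have l: "lam + 1 \<noteq> 0" using 3 by linarith
    have pd: "((\<lambda>x. x powr (lam + 1)) has_real_derivative (lam + 1) * x powr lam) (at x)"
      using has_real_derivative_powr[OF assms, of "lam + 1"] by simp
    have "((\<lambda>x. (x powr (lam + 1) - x + lam * (1 - x)) / (lam * (lam + 1))) has_real_derivative
       ((lam + 1) * x powr lam - 1 + lam * (0 - 1)) / (lam * (lam + 1))) (at x)"
    proof -
      have "((\<lambda>x. x powr (lam + 1) - x + lam * (1 - x)) has_real_derivative
         ((lam + 1) * x powr lam - 1 + lam * (0 - 1))) (at x)"
        by (intro DERIV_add DERIV_diff pd DERIV_ident DERIV_cmult DERIV_const)
      then show ?thesis by (rule DERIV_cdivide)
    qed
    moreover have "((lam + 1) * x powr lam - 1 + lam * (0 - 1)) / (lam * (lam + 1)) = d lam x"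
      using 3 l by (simp add: d_def divide_simps) (simp add: algebra_simps)
    ultimately show ?thesis unfolding e by simp
  qed
qed

lemma d_deriv: assumes "x > 0" shows "(d lam has_real_derivative x powr (lam - 1)) (at x)"
proof (cases "lam = 0")
  case True
  have e: "d lam = ln" using True by (simp add: d_def fun_eq_iff)
  show ?thesis unfolding e using assms True
    by (auto intro!: derivative_eq_intros simp: powr_minus divide_simps)
next
  case False
  have e: "d lam = (\<lambda>x. (x powr lam - 1) / lam)" using False by (simp add: d_def fun_eq_iff)
  show ?thesis unfolding e using assms False
    by (auto intro!: derivative_eq_intros simp: divide_simps)
qed

lemma d_neg: assumes "0 < x" "x < 1" shows "d lam x < 0"
proof -
  consider "lam = 0" | "lam > 0" | "lam < 0" by linarith
  then show ?thesis
  proof cases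
    case 1 then show ?thesis using assms by (simp add: d_def)
  next
    case 2
    have "x powr lam < 1 powr lam" using assms 2 by (intro powr_less_mono2) auto
    then show ?thesis using 2 by (simp add: d_def divide_simps)
  next
    case 3
    have "1 powr lam < x powr lam" using assms 3 by (intro powr_less_mono2_neg) auto
    then show ?thesis using 3 by (simp add: d_def divide_simps)
  qed
qed

lemma d_1[simp]: "d lam 1 = 0" by (simp add: d_def)



lemma P_isCont: "x > 0 \<Longrightarrow> isCont (P lam) x"
  using P_deriv DERIV_isCont by blast

lemma P_strict: assumes "0 < x" "x < y" "y \<le> 1" shows "P lam y < P lam x"
proof -
  have "\<And>z. x \<le> z \<Longrightarrow> z \<le> y \<Longrightarrow> (P lam has_real_derivative d lam z) (at z)"
    using assms by (intro P_deriv) auto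
  from MVT2[OF assms(2) this] obtain z where z: "x < z" "z < y" "P lam y - P lam x = (y - x) * d lam z"
    by blast
  have "d lam z < 0" using z assms by (intro d_neg) auto
  then have "(y - x) * d lam z < 0" using assms by (simp add: mult_pos_neg)
  then show ?thesis using z by linarith
qed

lemma P_pos: "0 < x \<Longrightarrow> x < 1 \<Longrightarrow> P lam x > 0"
  using P_strict[of x 1 lam] by simp

lemma P_nonneg: "0 < x \<Longrightarrow> x \<le> 1 \<Longrightarrow> P lam x \<ge> 0"
  using P_pos[of x lam] by (cases "x = 1") auto

lemma P_inj: assumes "0 < x" "x \<le> 1" "0 < y" "y \<le> 1" "P lam x = P lam y" shows "x = y"
  using P_strict[of x y lam] P_strict[of y x lam] assms by (cases x y rule: linorder_cases) auto

lemma P_le_iff: assumes "0 < x" "x \<le> 1" "0 < y" "y \<le> 1" shows "P lam x \<le> P lam y \<longleftrightarrow> y \<le> x"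
  using P_strict[of x y lam] P_strict[of y x lam] assms by (cases x y rule: linorder_cases) auto

lemma P_lim: assumes "lam > -1"
  shows "(P lam \<longlongrightarrow> 1 / (lam + 1)) (at_right 0)"
proof (cases "lam = 0")
  case True
  have e: "P lam = (\<lambda>x. 1 - x + x * ln x)" using True by (simp add: P_def fun_eq_iff)
  show ?thesis unfolding e using True by real_asymp
next
  case False
  have l: "lam \<noteq> -1" "lam + 1 > 0" using assms by auto
  have e: "P lam = (\<lambda>x. (x powr (lam + 1) - x + lam * (1 - x)) / (lam * (lam + 1)))"
    using False l by (simp add: P_def fun_eq_iff)
  have nz: "lam * (lam + 1) \<noteq> 0" using False l by simp
  have id: "((\<lambda>x::real. x) \<longlongrightarrow> 0) (at_right 0)"
    by (rule tendsto_ident_at)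
  have pw: "((\<lambda>x::real. x powr (lam + 1)) \<longlongrightarrow> 0) (at_right 0)"
    by (rule tendsto_zero_powrI[OF id tendsto_const _ l(2)])
       (auto simp: eventually_at_right_field intro: exI[of _ 1])
  have "((\<lambda>x. (x powr (lam + 1) - x + lam * (1 - x)) / (lam * (lam + 1))) \<longlongrightarrow>
      (0 - 0 + lam * (1 - 0)) / (lam * (lam + 1))) (at_right 0)"
    by (intro tendsto_intros pw id) (use nz in auto)
  moreover have "(0 - 0 + lam * (1 - 0)) / (lam * (lam + 1)) = 1 / (lam + 1)"
    using nz False by (simp add: divide_simps)
  ultimately show ?thesis unfolding e by simp
qed

lemma below0: assumes "0 < x" "x \<le> 1" shows "ereal (P lam x) < pd_phi lam 0"
proof (cases "lam > -1")
  case False then show ?thesis by (simp add: pd_phi_def)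
next
  case True
  have "P lam (x/2) \<le> 1 / (lam + 1)"
  proof (rule tendsto_le[OF _ P_lim[OF True] tendsto_const])
    show "eventually (\<lambda>y. P lam (x/2) \<le> P lam y) (at_right 0)"
      unfolding eventually_at_right_field
      apply (intro exI[of _ "x/2"])
      using assms by (auto intro!: less_imp_le[OF P_strict])
  qed simp
  moreover have "P lam x < P lam (x/2)" using assms by (intro P_strict) auto
  ultimately show ?thesis using True by (simp add: pd_phi_def)
qed

lemma big: assumes "ereal t < pd_phi lam 0" shows "\<exists>e. 0 < e \<and> e \<le> 1 \<and> t \<le> P lam e"
proof -
  consider "lam > -1" | "lam = -1" | "lam < -1" by linarith
  then show ?thesis
  proof cases
    case 1
    then have "t < 1 / (lam + 1)" using assms by (simp add: pd_phi_def)
    then have "eventually (\<lambda>y. t < P lam y) (at_right 0)"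
      using P_lim[OF 1] by (simp add: order_tendsto_iff)
    moreover have "eventually (\<lambda>y. 0 < y \<and> y < (1::real)) (at_right 0)"
      unfolding eventually_at_right_field by (intro exI[of _ 1]) auto
    ultimately have "eventually (\<lambda>y. t < P lam y \<and> 0 < y \<and> y < 1) (at_right 0)"
      by (rule eventually_conj)
    then obtain y where "t < P lam y \<and> 0 < y \<and> y < 1"
      using eventually_happens[of _ "at_right (0::real)"] by force
    then show ?thesis by (intro exI[of _ y]) auto
  next
    case 2
    define e where "e = exp (- (\<bar>t\<bar> + 1))"
    have "e > 0" "e \<le> 1" by (auto simp: e_def)
    moreover have "P lam e = e + \<bar>t\<bar>" using 2 by (simp add: P_def e_def)
    ultimately show ?thesis using \<open>e > 0\<close> by (intro exI[of _ e]) auto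
  next
    case 3
    define M where "M = \<bar>t\<bar> * (lam * (lam + 1)) + \<bar>lam\<bar> + 1"
    have lp: "lam * (lam + 1) > 0" using 3 by (simp add: mult_neg_neg)
    have "\<bar>t\<bar> * (lam * (lam + 1)) \<ge> 0" using lp by simp
    then have M1: "M > 1" unfolding M_def using 3 by linarith
    define e where "e = M powr (1 / (lam + 1))"
    have e0: "e > 0" using M1 by (simp add: e_def)
    have "e < 1 powr (1 / (lam + 1))" unfolding e_def using M1 3
      by (intro powr_less_mono2_neg) (auto simp: divide_simps)
    then have e1: "e < 1" by simp
    have eM: "e powr (lam + 1) = M" using M1 3 by (simp add: e_def powr_powr)
    have "P lam e = (M - e + lam * (1 - e)) / (lam * (lam + 1))"
      using 3 eM by (simp add: P_def)
    moreover have "M - e + lam * (1 - e) \<ge> t * (lam * (lam + 1))"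
    proof -
      have "- e + lam * (1 - e) \<ge> lam" 
      proof -
        have "0 \<le> (- e) * (1 + lam)" using e0 3 by (intro mult_nonpos_nonpos) auto
        then show ?thesis by (simp add: algebra_simps)
      qed
      moreover have "\<bar>t\<bar> * (lam * (lam + 1)) \<ge> t * (lam * (lam + 1))" using lp
        by (intro mult_right_mono) auto
      ultimately show ?thesis unfolding M_def using 3 by linarith
    qed
    ultimately have "t \<le> P lam e" using lp by (simp add: pos_le_divide_eq)
    then show ?thesis using e0 e1 by (intro exI[of _ e]) auto
  qed
qed

lemma exists: assumes "0 \<le> t" "ereal t < pd_phi lam 0"
  shows "\<exists>x. 0 < x \<and> x \<le> 1 \<and> P lam x = t"
proof -
  obtain e where e: "0 < e" "e \<le> 1" "t \<le> P lam e" using big[OF assms(2)] by blast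
  have "\<exists>x. e \<le> x \<and> x \<le> 1 \<and> P lam x = t"
    by (rule IVT2) (use e assms in \<open>auto intro: P_isCont\<close>)
  then obtain x where "e \<le> x" "x \<le> 1" "P lam x = t" by blast
  then show ?thesis using e by (intro exI[of _ x]) auto
qed

lemma pinv_eq: assumes "0 < x" "x \<le> 1"
  shows "pd_pinv lam (ereal (P lam x)) = x"
proof -
  have "(THE y. y \<in> {0..1} \<and> pd_phi lam y = ereal (P lam x)) = x"
  proof (rule the_equality)
    show "x \<in> {0..1} \<and> pd_phi lam x = ereal (P lam x)" using assms by (simp add: phi_P)
  next
    fix y assume y: "y \<in> {0..1} \<and> pd_phi lam y = ereal (P lam x)"
    have "y \<noteq> 0" using y below0[OF assms, of lam] by auto
    then have "P lam y = P lam x" using y by (simp add: phi_P)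
    then show "y = x" using P_inj[of y x lam] y assms \<open>y \<noteq> 0\<close> by auto
  qed
  then show ?thesis using below0[OF assms, of lam] by (simp add: pd_pinv_def)
qed

lemma pinv_nonneg: assumes "0 \<le> t" shows "pd_pinv lam (ereal t) \<ge> 0"
proof (cases "ereal t < pd_phi lam 0")
  case True
  obtain x where x: "0 < x" "x \<le> 1" "P lam x = t" using exists[OF assms True] by blast
  show ?thesis using pinv_eq[OF x(1,2), of lam] x by simp
next
  case False then show ?thesis by (simp add: pd_pinv_def)
qed



lemma d_exp: assumes "w > 0" shows "d lam (exp (- w)) = - w * sfun (- (lam * w))"
proof (cases "lam = 0")
  case True then show ?thesis by (simp add: d_def sfun_def)
next
  case False
  have "exp (- w) powr lam = exp (- (lam * w))" by (simp add: powr_def)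
  then show ?thesis using False assms by (simp add: d_def sfun_def divide_simps)
qed

lemma key_E: assumes "0 < y" "y < 1" "a < b"
  shows "y powr (a - b) * d b y \<le> d a y"
proof -
  define w where "w = - ln y"
  have w0: "w > 0" using assms by (simp add: w_def)
  have yw: "y = exp (- w)" using assms by (simp add: w_def)
  have p: "y powr (a - b) = exp ((b - a) * w)" using assms by (simp add: powr_def w_def algebra_simps)
  have ee: "exp ((b - a) * w) * exp (- (b * w)) = exp (- (a * w))"
    by (simp add: exp_add[symmetric] algebra_simps)
  have "y powr (a - b) * d b y = exp ((b - a) * w) * (- w * (exp (- (b * w)) * sfun (b * w)))"
  proof -
    have "d b y = - w * (exp (- (b * w)) * sfun (b * w))"
      using d_exp[OF w0, of b] sfun_neg[of "b * w"] yw by simp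
    then show ?thesis unfolding p by simp
  qed
  also have "\<dots> = - w * (exp ((b - a) * w) * exp (- (b * w))) * sfun (b * w)"
    by (simp add: algebra_simps)
  finally have l: "y powr (a - b) * d b y = - w * exp (- (a * w)) * sfun (b * w)"
    unfolding ee .
  have r: "d a y = - w * exp (- (a * w)) * sfun (a * w)"
    unfolding yw d_exp[OF w0] sfun_neg by simp
  have "sfun (a * w) \<le> sfun (b * w)" using w0 assms by (intro sfun_mono) simp
  moreover have "- w * exp (- (a * w)) < 0" using w0 by simp
  ultimately show ?thesis unfolding l r by (simp add: mult_le_cancel_left)
qed

lemma ratio: assumes "0 < x" "x < y" "y < 1" "a < b"
  shows "d a y * d b x \<le> d a x * d b y"
proof -
  define F where "F = (\<lambda>t. d a t * d b y - d a y * d b t)"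
  define F' where "F' = (\<lambda>t. t powr (a - 1) * d b y - d a y * t powr (b - 1))"
  have der: "\<And>t. x \<le> t \<Longrightarrow> t \<le> y \<Longrightarrow> (F has_real_derivative F' t) (at t)"
    unfolding F_def F'_def using assms
    by (intro derivative_eq_intros) (auto intro!: d_deriv)
  from MVT2[OF assms(2) der] obtain z where z: "x < z" "z < y" "F y - F x = (y - x) * F' z"
    by blast
  have dby: "d b y < 0" using assms by (intro d_neg) auto
  have zp: "z > 0" using z assms by simp
  have "y powr (a - b) < z powr (a - b)" using z zp assms by (intro powr_less_mono2_neg) auto
  then have "z powr (a - b) * d b y \<le> y powr (a - b) * d b y" using dby
    by (simp add: mult_le_cancel_right)
  also have "\<dots> \<le> d a y" using key_E[of y a b] assms by simp
  finally have "z powr (a - b) * d b y \<le> d a y" .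
  then have "z powr (b - 1) * (z powr (a - b) * d b y) \<le> z powr (b - 1) * d a y"
    by (intro mult_left_mono) auto
  moreover have "z powr (b - 1) * z powr (a - b) = z powr (a - 1)"
    by (simp add: powr_add[symmetric])
  ultimately have "F' z \<le> 0" unfolding F'_def by (simp add: algebra_simps)
  then have "(y - x) * F' z \<le> 0" using assms by (simp add: mult_nonneg_nonpos)
  moreover have "F y = 0" by (simp add: F_def)
  ultimately have "F x \<ge> 0" using z by linarith
  then show ?thesis by (simp add: F_def)
qed

lemma key_ord: assumes "lam1 < lam2" "0 < a" "a \<le> 1" "0 < b" "b \<le> a" "0 < c" "c \<le> 1"
  and eq: "P lam2 c = P lam2 a + P lam2 b"
  shows "P lam1 a + P lam1 b \<le> P lam1 c"
proof (cases "a = 1")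
  case True
  then have "P lam2 c = P lam2 b" using eq by simp
  then have "c = b" using P_inj[of c b lam2] assms by auto
  then show ?thesis using True by simp
next
  case False
  then have a1: "a < 1" using assms by simp
  have S: "P lam2 a > 0" using P_pos a1 assms by auto
  have cb: "c < b"
  proof (rule ccontr)
    assume "\<not> c < b"
    then have "P lam2 c \<le> P lam2 b" using P_le_iff[of c b lam2] assms by auto
    then show False using eq S by linarith
  qed
  have cont: "\<And>lam z. 0 < z \<Longrightarrow> isCont (P lam) z" by (rule P_isCont)
  obtain xi where xi: "c < xi" "xi < b"
      "(P lam1 b - P lam1 c) * d lam2 xi = (P lam2 b - P lam2 c) * d lam1 xi"
  proof -
    have "\<exists>xi. c < xi \<and> xi < b \<and> (P lam1 b - P lam1 c) * d lam2 xi = (P lam2 b - P lam2 c) * d lam1 xi"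
      by (rule GMVT'[OF cb]) (use assms in \<open>auto intro!: cont P_deriv\<close>)
    then show ?thesis using that by blast
  qed
  obtain eta where eta: "a < eta" "eta < 1"
      "(P lam1 1 - P lam1 a) * d lam2 eta = (P lam2 1 - P lam2 a) * d lam1 eta"
  proof -
    have "\<exists>eta. a < eta \<and> eta < 1 \<and> (P lam1 1 - P lam1 a) * d lam2 eta = (P lam2 1 - P lam2 a) * d lam1 eta"
      by (rule GMVT'[OF a1]) (use assms in \<open>auto intro!: cont P_deriv\<close>)
    then show ?thesis using that by blast
  qed
  define X where "X = P lam1 c - P lam1 b"
  define Y where "Y = P lam1 a"
  define S where "S = P lam2 a"
  have e1: "X * d lam2 xi = S * d lam1 xi" using xi(3) eq unfolding X_def S_def
    by (simp add: algebra_simps)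
  have e2: "Y * d lam2 eta = S * d lam1 eta" using eta(3) unfolding Y_def S_def
    by (simp add: algebra_simps)
  have r: "d lam1 eta * d lam2 xi \<le> d lam1 xi * d lam2 eta"
    using assms xi eta by (intro ratio) auto
  have n1: "d lam2 xi < 0" using xi assms by (intro d_neg) auto
  have n2: "d lam2 eta < 0" using eta assms by (intro d_neg) auto
  have pp: "d lam2 xi * d lam2 eta > 0" using n1 n2 by (simp add: mult_neg_neg)
  have "Y * (d lam2 xi * d lam2 eta) = S * (d lam1 eta * d lam2 xi)"
    using e2 by (simp add: algebra_simps)
  also have "\<dots> \<le> S * (d lam1 xi * d lam2 eta)" using r S unfolding S_def
    by (intro mult_left_mono) auto
  also have "\<dots> = X * (d lam2 xi * d lam2 eta)"
    using e1 by (simp add: algebra_simps)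
  finally have "Y \<le> X" using pp by (meson mult_le_cancel_right_pos)
  then show ?thesis unfolding X_def Y_def by simp
qed

lemma key: assumes "lam1 < lam2" "0 < a" "a \<le> 1" "0 < b" "b \<le> 1" "0 < c" "c \<le> 1"
  and eq: "P lam2 c = P lam2 a + P lam2 b"
  shows "P lam1 a + P lam1 b \<le> P lam1 c"
proof (cases "b \<le> a")
  case True then show ?thesis using key_ord assms by blast
next
  case False
  then show ?thesis using key_ord[of lam1 lam2 b a c] assms by (simp add: add.commute)
qed

lemma phi_nonneg: assumes "u \<in> {0..1}" shows "pd_phi lam u \<ge> 0"
proof (cases "u = 0")
  case True then show ?thesis by (simp add: pd_phi_def)
next
  case False then show ?thesis using assms P_nonneg[of u lam] by (simp add: phi_P)
qed

lemma copula_zero: assumes "u \<in> {0..1}" shows "pd_copula lam 0 u = 0" "pd_copula lam u 0 = 0"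
proof -
  have "pd_phi lam 0 \<le> pd_phi lam 0 + pd_phi lam u"
    using phi_nonneg[OF assms] by (simp add: add_increasing2)
  then show "pd_copula lam 0 u = 0" "pd_copula lam u 0 = 0"
    by (auto simp: pd_copula_def pd_pinv_def add.commute not_less)
qed

theorem theorem3:
  fixes lam1 lam2 u1 u2 :: real
  assumes "lam1 < lam2"
    and "u1 \<in> {0..1}" and "u2 \<in> {0..1}"
  shows "pd_copula lam1 u1 u2 \<ge> pd_copula lam2 u1 u2"
proof (cases "u1 = 0 \<or> u2 = 0")
  case True
  then show ?thesis using copula_zero assms by auto
next
  case False
  then have u: "0 < u1" "u1 \<le> 1" "0 < u2" "u2 \<le> 1" using assms by auto
  define s1 where "s1 = P lam1 u1 + P lam1 u2"
  define s2 where "s2 = P lam2 u1 + P lam2 u2"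
  have c1: "pd_copula lam1 u1 u2 = pd_pinv lam1 (ereal s1)"
    using u by (simp add: pd_copula_def phi_P s1_def)
  have c2: "pd_copula lam2 u1 u2 = pd_pinv lam2 (ereal s2)"
    using u by (simp add: pd_copula_def phi_P s2_def)
  have s1p: "s1 \<ge> 0" using u P_nonneg unfolding s1_def by (simp add: add_nonneg_nonneg)
  have s2p: "s2 \<ge> 0" using u P_nonneg unfolding s2_def by (simp add: add_nonneg_nonneg)
  show ?thesis
  proof (cases "ereal s2 < pd_phi lam2 0")
    case False
    then have "pd_pinv lam2 (ereal s2) = 0" by (simp add: pd_pinv_def)
    then show ?thesis using c1 c2 pinv_nonneg[OF s1p] by simp
  next
    case True
    obtain c where c: "0 < c" "c \<le> 1" "P lam2 c = s2" using exists[OF s2p True] by blast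
    have C2: "pd_pinv lam2 (ereal s2) = c" using pinv_eq[OF c(1,2), of lam2] c by simp
    have k: "s1 \<le> P lam1 c" unfolding s1_def
      using key[OF assms(1) u c(1,2)] c s2_def by simp
    have "ereal s1 < pd_phi lam1 0"
      using below0[OF c(1,2), of lam1] k by (meson ereal_less_eq(3) order_le_less_trans)
    then obtain c' where c': "0 < c'" "c' \<le> 1" "P lam1 c' = s1" using exists[OF s1p] by blast
    have C1: "pd_pinv lam1 (ereal s1) = c'" using pinv_eq[OF c'(1,2), of lam1] c' by simp
    have "c \<le> c'" using P_le_iff[OF c'(1,2) c(1,2), of lam1] k c' by simp
    then show ?thesis using c1 c2 C1 C2 by simp
  qed
qed


end
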